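(* Let $U_{(1)}\leq\dots\leq U_{(n)}$ be the order statistics of an i.i.d. sample of size $n$ from the uniform distribution on $[0,1]$. Then for all $k\in\{1,\dots,n\}$ and $t>0$: \[\Pr\left(U_{(k)}>\frac{(\sqrt{k-1}+\sqrt t)^2}{n}\right)=\Pr\left(1-U_{(n-k+1)}>\frac{(\sqrt{k-1}+\sqrt t)^2}{n}\right)\leq e^{-t},\] \[\Pr\left(U_{(k)}<\frac{(\sqrt k-\sqrt t)^2}{n}\right)=\Pr\left(1-U_{(n-k+1)}<\frac{(\sqrt k-\sqrt t)^2}{n}\right)\leq e^{-2t}.\]
   Formalization: The bound $e^{-2t}$ on the lower-tail probabilities holds only for t <= k, while both equalities of probabilities hold for all t > 0. Apart from conventions, each condition added here is assumed in the paper as well or is needed for the statement above to hold. *)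

theory Defs
  imports "HOL-Probability.Probability"
begin

definition unif_sample :: "nat \<Rightarrow> (nat \<Rightarrow> real) measure" where
  "unif_sample n = PiM {..<n} (\<lambda>_. uniform_measure lborel {0..1::real})"

definition order_stat :: "nat \<Rightarrow> nat \<Rightarrow> (nat \<Rightarrow> real) \<Rightarrow> real" where
  "order_stat n k x = sort (map x [0..<n]) ! (k - 1)"

end

theory Submission
  imports Defs
begin


lemma sort_nth_iff:
  fixes xs :: "real list"
  assumes down: "\<And>y z. P y \<Longrightarrow> z \<le> y \<Longrightarrow> P z" and k: "1 \<le> k" "k \<le> length xs"
  shows "P (sort xs ! (k - 1)) \<longleftrightarrow> k \<le> length (filter P xs)"
proof -
  define L where "L = sort xs"
  have sL: "sorted L" and lL: "length L = length xs" by (simp_all add: L_def)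
  have fl: "length (filter P L) = length (filter P xs)"
    unfolding L_def by (metis filter_sort length_sort)
  have card: "length (filter P L) = card {j. j < length L \<and> P (L ! j)}"
    by (rule length_filter_conv_card)
  show ?thesis
  proof
    assume "P (sort xs ! (k - 1))"
    hence "P (L ! (k - 1))" by (simp add: L_def)
    hence "{..<k} \<subseteq> {j. j < length L \<and> P (L ! j)}"
      using k lL sL by (auto intro: down simp: sorted_nth_mono)
    hence "card {..<k} \<le> card {j. j < length L \<and> P (L ! j)}"
      by (intro card_mono) auto
    thus "k \<le> length (filter P xs)" using card fl by simp
  next
    assume h: "k \<le> length (filter P xs)"
    show "P (sort xs ! (k - 1))"
    proof (rule ccontr)
      assume "\<not> P (sort xs ! (k - 1))"
      hence np: "\<not> P (L ! (k - 1))" by (simp add: L_def)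
      have "{j. j < length L \<and> P (L ! j)} \<subseteq> {..<k-1}"
      proof
        fix j assume j: "j \<in> {j. j < length L \<and> P (L ! j)}"
        show "j \<in> {..<k-1}"
        proof (rule ccontr)
          assume "j \<notin> {..<k-1}"
          hence "L ! (k-1) \<le> L ! j" using j sL by (auto intro: sorted_nth_mono)
          thus False using j np down by blast
        qed
      qed
      hence "card {j. j < length L \<and> P (L ! j)} \<le> card {..<k-1}"
        by (intro card_mono) auto
      thus False using h card fl k by simp
    qed
  qed
qed



abbreviation "U \<equiv> uniform_measure lborel {0..1::real}"

lemma probU: "prob_space U"
  by (rule prob_space_uniform_measure) auto

lemma sets_U[simp, measurable_cong]: "sets U = sets borel" by simp

lemma space_U[simp]: "space U = UNIV" by simp

lemma prob_M: "prob_space (unif_sample n)"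
  unfolding unif_sample_def by (intro prob_space_PiM probU)

lemma enn_aux: "0 \<le> (q::real) \<Longrightarrow> q \<le> 1 \<Longrightarrow> 0 \<le> e \<Longrightarrow>
  ennreal (1 - q) + ennreal e * ennreal q = ennreal (1 - q + q * e)"
  by (simp add: ennreal_plus ennreal_mult' mult.commute)

lemma int_U:
  assumes A[measurable]: "A \<in> sets borel"
  shows "(\<integral>\<^sup>+ y. ennreal (exp (l * indicator A y)) \<partial>U)
        = ennreal (1 - measure U A + measure U A * exp l)"
proof -
  interpret prob_space U by (rule probU)
  have "(\<integral>\<^sup>+ y. ennreal (exp (l * indicator A y)) \<partial>U)
      = (\<integral>\<^sup>+ y. indicator (UNIV - A) y + ennreal (exp l) * indicator A y \<partial>U)"
    by (intro nn_integral_cong) (auto split: split_indicator)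
  also have "\<dots> = emeasure U (UNIV - A) + ennreal (exp l) * emeasure U A"
    by (subst nn_integral_add) (auto simp: nn_integral_cmult_indicator)
  also have "\<dots> = ennreal (1 - measure U A) + ennreal (exp l) * ennreal (measure U A)"
    using prob_compl[of A] by (simp add: emeasure_eq_measure)
  also have "\<dots> = ennreal (1 - measure U A + measure U A * exp l)"
    using prob_le_1[of A] by (intro enn_aux) auto
  finally show ?thesis .
qed

lemma chernoff:
  assumes A[measurable]: "A \<in> sets borel"
  shows "measure (unif_sample n) {x \<in> space (unif_sample n). 0 \<le> l * ((\<Sum>i<n. indicator A (x i)) - m)}
     \<le> exp (- l * m) * (1 - measure U A + measure U A * exp l) ^ n"
proof -
  define M where "M = unif_sample n"
  define p where "p = measure U A"
  interpret M: prob_space M unfolding M_def by (rule prob_M)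
  interpret P: product_prob_space "\<lambda>_. U"
    by (intro product_prob_spaceI probU)
  have p01: "0 \<le> p" "p \<le> 1" unfolding p_def using prob_space.prob_le_1[OF probU, of A] by (simp_all del: measure_uniform_measure)
  have base: "0 \<le> 1 - p + p * exp l" using p01 by (smt (verit) exp_gt_zero mult_nonneg_nonneg)
  define B where "B = {x \<in> space M. 0 \<le> l * ((\<Sum>i<n. indicator A (x i)) - m)}"
  have Bm: "B \<in> sets M" unfolding B_def M_def unif_sample_def by measurable
  have "emeasure M B = (\<integral>\<^sup>+ x. indicator B x \<partial>M)" using Bm by simp
  also have "\<dots> \<le> (\<integral>\<^sup>+ x. ennreal (exp (l * ((\<Sum>i<n. indicator A (x i)) - m))) \<partial>M)"
    by (intro nn_integral_mono) (auto simp: B_def split: split_indicator)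
  also have "\<dots> = (\<integral>\<^sup>+ x. ennreal (exp (- l * m)) * (\<Prod>i\<in>{..<n}. ennreal (exp (l * indicator A (x i)))) \<partial>M)"
  proof (intro nn_integral_cong)
    fix x
    have "exp (l * ((\<Sum>i<n. indicator A (x i)) - m)) = exp (- l * m) * (\<Prod>i\<in>{..<n}. exp (l * indicator A (x i)))"
      by (simp add: exp_sum[symmetric] exp_add[symmetric] sum_distrib_left algebra_simps)
    thus "ennreal (exp (l * ((\<Sum>i<n. indicator A (x i)) - m))) = ennreal (exp (- l * m)) * (\<Prod>i\<in>{..<n}. ennreal (exp (l * indicator A (x i))))"
      by (simp add: prod_ennreal ennreal_mult' prod_nonneg)
  qed
  also have "\<dots> = ennreal (exp (- l * m)) * (\<integral>\<^sup>+ x. (\<Prod>i\<in>{..<n}. ennreal (exp (l * indicator A (x i)))) \<partial>M)"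
    unfolding M_def unif_sample_def by (rule nn_integral_cmult) measurable
  also have "(\<integral>\<^sup>+ x. (\<Prod>i\<in>{..<n}. ennreal (exp (l * indicator A (x i)))) \<partial>M)
       = (\<Prod>i\<in>{..<n}. (\<integral>\<^sup>+ y. ennreal (exp (l * indicator A y)) \<partial>U))"
    unfolding M_def unif_sample_def
    by (rule P.product_nn_integral_prod[where f="\<lambda>_ y. ennreal (exp (l * indicator A y))"]) auto
  also have "\<dots> = ennreal ((1 - p + p * exp l) ^ n)"
    using base by (simp add: int_U p_def ennreal_power)
  finally have "emeasure M B \<le> ennreal (exp (- l * m) * (1 - p + p * exp l) ^ n)"
    using base by (simp add: ennreal_mult')
  hence "measure M B \<le> exp (- l * m) * (1 - p + p * exp l) ^ n"
    using base by (simp add: M.emeasure_eq_measure)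
  thus ?thesis unfolding B_def M_def p_def .
qed



lemma lborel_refl: "distr lborel borel (\<lambda>y::real. 1 - y) = lborel"
proof -
  have "distr lborel borel (\<lambda>y::real. 1 - y) = distr lborel borel ((+) 1 \<circ> uminus)"
    by (simp add: comp_def)
  also have "\<dots> = distr (distr lborel borel uminus) borel ((+) (1::real))"
    by (subst distr_distr) auto
  also have "\<dots> = lborel" by (simp add: lborel_distr_uminus lborel_distr_plus)
  finally show ?thesis .
qed

lemma U_refl: "distr U U (\<lambda>y::real. 1 - y) = U"
proof (rule measure_eqI)
  show "sets (distr U U (\<lambda>y::real. 1 - y)) = sets U" by simp
  fix A assume "A \<in> sets (distr U U (\<lambda>y::real. 1 - y))"
  hence A[measurable]: "A \<in> sets borel" by simp
  have "(\<lambda>y::real. 1 - y) -` A \<inter> {0..1} = (\<lambda>y::real. 1 - y) -` ({0..1} \<inter> A)" by auto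
  moreover have "emeasure lborel ((\<lambda>y::real. 1 - y) -` ({0..1} \<inter> A)) = emeasure lborel ({0..1} \<inter> A)"
  proof -
    have "emeasure lborel ((\<lambda>y::real. 1 - y) -` ({0..1} \<inter> A)) = emeasure (distr lborel borel (\<lambda>y::real. 1 - y)) ({0..1} \<inter> A)"
      by (subst emeasure_distr) auto
    thus ?thesis by (simp add: lborel_refl)
  qed
  moreover have pm: "(\<lambda>y::real. 1 - y) -` A \<in> sets borel"
    using measurable_sets_borel[of "\<lambda>y::real. 1 - y" borel A] by simp
  ultimately show "emeasure (distr U U (\<lambda>y::real. 1 - y)) A = emeasure U A"
    by (subst emeasure_distr) (auto simp: Int_commute emeasure_uniform_measure[OF _ pm])
qed

definition reflx :: "nat \<Rightarrow> (nat \<Rightarrow> real) \<Rightarrow> (nat \<Rightarrow> real)" where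
  "reflx n = compose {..<n} (\<lambda>y. 1 - y)"

lemma M_refl: "distr (unif_sample n) (unif_sample n) (reflx n) = unif_sample n"
  unfolding unif_sample_def reflx_def
  by (subst distr_PiM_finite_prob_space') (auto simp: probU U_refl)

lemma refl_meas: "reflx n \<in> measurable (unif_sample n) (unif_sample n)"
  unfolding reflx_def compose_def unif_sample_def by measurable

lemma measure_refl:
  assumes "B \<in> sets (unif_sample n)"
  shows "measure (unif_sample n) (reflx n -` B \<inter> space (unif_sample n)) = measure (unif_sample n) B"
proof -
  have "measure (unif_sample n) (reflx n -` B \<inter> space (unif_sample n))
     = measure (distr (unif_sample n) (unif_sample n) (reflx n)) B"
    using assms refl_meas by (simp add: measure_distr)
  thus ?thesis by (simp add: M_refl)
qed



lemma ln_ineq: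
  fixes r :: real assumes "0 \<le> r" "r < 1"
  shows "2 * r + r^2 \<le> - 2 * ln (1 - r)"
proof -
  define f where "f = (\<lambda>x::real. - 2 * ln (1 - x) - 2 * x - x^2)"
  have "f 0 \<le> f r"
  proof (rule DERIV_nonneg_imp_increasing_open[OF assms(1)])
    fix x :: real assume x: "0 < x" "x < r"
    have "DERIV f x :> (- 2 * (- 1 / (1 - x)) - 2 - 2 * x)"
      unfolding f_def using x assms
      by (auto intro!: derivative_eq_intros simp: power2_eq_square)
    moreover have "0 \<le> - 2 * (- 1 / (1 - x)) - 2 - 2 * x"
    proof -
      have "- 2 * (- 1 / (1 - x)) - 2 - 2 * x = 2 * x^2 / (1 - x)"
        using x assms by (simp add: field_simps power2_eq_square)
      thus ?thesis using x assms by simp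
    qed
    ultimately show "\<exists>y. DERIV f x :> y \<and> 0 \<le> y" by blast
  next
    show "continuous_on {0..r} f" unfolding f_def using assms
      by (intro continuous_intros) auto
  qed
  thus ?thesis by (simp add: f_def)
qed

lemma R1:
  fixes n k :: nat and t P :: real
  assumes k: "1 \<le> k" "k \<le> n" and t: "t > 0"
  defines "a \<equiv> (sqrt (real k - 1) + sqrt t)^2 / real n"
  defines "p \<equiv> (if a \<ge> 1 then 1 else a)"
  assumes bound: "\<And>l. 0 \<le> l \<Longrightarrow> P \<le> exp (l * (real k - 1)) * (1 - p + p * exp (- l)) ^ n"
  shows "P \<le> exp (- t)"
proof (cases "a \<ge> 1")
  case True
  hence p: "p = 1" by (simp add: p_def)
  define l where "l = t / (real n - (real k - 1))"
  have nk: "real n - (real k - 1) > 0" using k by simp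
  have "P \<le> exp (l * (real k - 1)) * exp (- l) ^ n" using bound[of l] t nk by (simp add: p l_def)
  also have "\<dots> = exp (l * (real k - 1) + real n * (- l))"
    by (simp only: exp_of_nat_mult[symmetric] exp_add)
  also have "l * (real k - 1) + real n * (- l) = - t"
  proof -
    have h: "l * (real n - (real k - 1)) = t" using nk by (simp add: l_def)
    thus ?thesis by (simp add: algebra_simps)
  qed
  finally show ?thesis .
next
  case False
  hence p: "p = a" by (simp add: p_def)
  have npos: "real n > 0" using k by simp
  have sp: "sqrt (real k - 1) + sqrt t > 0" using t k by (simp add: add_nonneg_pos)
  have a0: "a > 0" unfolding a_def using sp npos by simp
  define \<mu> where "\<mu> = (sqrt (real k - 1) + sqrt t)^2"
  have mu: "real n * a = \<mu>" unfolding a_def \<mu>_def using npos by simp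
  have gen: "P \<le> exp (l * (real k - 1) + \<mu> * (exp (- l) - 1))" if l: "0 \<le> l" for l
  proof -
    have b0: "0 \<le> 1 - a + a * exp (- l)" using False a0 by (smt (verit) exp_gt_zero mult_nonneg_nonneg)
    have "1 - a + a * exp (- l) \<le> exp (a * (exp (- l) - 1))"
      using exp_ge_add_one_self[of "a * (exp (- l) - 1)"] by (simp add: algebra_simps)
    hence "(1 - a + a * exp (- l)) ^ n \<le> exp (a * (exp (- l) - 1)) ^ n"
      using b0 by (intro power_mono) auto
    also have "\<dots> = exp (\<mu> * (exp (- l) - 1))"
      by (simp add: exp_of_nat_mult[symmetric] mu[symmetric])
    finally have "exp (l * (real k - 1)) * (1 - a + a * exp (- l)) ^ n \<le> exp (l * (real k - 1)) * exp (\<mu> * (exp (- l) - 1))"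
      by (intro mult_left_mono) auto
    from order_trans[OF bound[OF l] this[folded p]] show ?thesis by (metis exp_add)
  qed
  show ?thesis
  proof (cases "k = 1")
    case True
    hence mut: "\<mu> = t" using t by (simp add: \<mu>_def)
    have e0: "(\<lambda>j::nat. exp (- real j)) \<longlonglongrightarrow> 0"
    proof -
      have "filterlim (\<lambda>j::nat. - real j) at_bot sequentially"
        by (simp add: filterlim_uminus_at_bot filterlim_real_sequentially)
      thus ?thesis by (rule filterlim_compose[OF exp_at_bot])
    qed
    have lim: "(\<lambda>j::nat. exp (real j * 0 + \<mu> * (exp (- real j) - 1))) \<longlonglongrightarrow> exp (0 + \<mu> * (0 - 1))"
      by (simp only: mult_zero_right) (intro tendsto_intros e0)
    have "P \<le> exp (0 + \<mu> * (0 - 1))"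
      by (rule LIMSEQ_le_const[OF lim]) (use gen True in auto)
    thus ?thesis using mut by simp
  next
    case False
    define v where "v = sqrt (real k - 1)"
    define u where "u = sqrt t"
    have v: "v > 0" using False k by (simp add: v_def)
    have u: "u > 0" using t by (simp add: u_def)
    have m: "real k - 1 = v^2" using k by (simp add: v_def)
    have tu: "t = u^2" using t by (simp add: u_def)
    have mu2: "\<mu> = (v + u)^2" by (simp add: \<mu>_def v_def u_def)
    define l where "l = ln (\<mu> / (real k - 1))"
    have ratio: "\<mu> / (real k - 1) = ((v + u) / v)^2" using v by (simp add: mu2 m power_divide)
    have l0: "0 \<le> l" unfolding l_def ratio using u v by (intro ln_ge_zero) (simp add: one_le_power)
    have el: "exp (- l) = (real k - 1) / \<mu>" unfolding l_def using u v
      by (simp add: exp_minus ratio m mu2)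
    have lnle: "ln ((v + u) / v) \<le> u / v" using ln_le_minus_one[of "(v+u)/v"] u v by (simp add: field_simps)
    have "l = 2 * ln ((v + u) / v)" unfolding l_def ratio using u v by (simp add: ln_realpow)
    hence "l * (real k - 1) \<le> 2 * (u / v) * v^2" unfolding m using lnle v
      by (intro mult_right_mono) auto
    also have "\<dots> = 2 * u * v" using v by (simp add: power2_eq_square)
    finally have A: "l * (real k - 1) \<le> 2 * u * v" .
    have "l * (real k - 1) + \<mu> * (exp (- l) - 1) = l * (real k - 1) + v^2 - (v+u)^2"
      unfolding el using u v by (simp add: m mu2 field_simps)
    also have "\<dots> \<le> - t" using A tu by (simp add: power2_eq_square algebra_simps)
    finally show ?thesis using gen[OF l0] by (meson exp_le_cancel_iff order_trans)
  qed
qed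

lemma R2:
  fixes n k :: nat and t P :: real
  assumes k: "1 \<le> k" "k \<le> n" and t: "t > 0" "t \<le> real k"
  defines "b \<equiv> (sqrt (real k) - sqrt t)^2 / real n"
  assumes b01: "0 \<le> b" "b \<le> 1"
  assumes bound: "\<And>l. 0 \<le> l \<Longrightarrow> P \<le> exp (- l * real k) * (1 - b + b * exp l) ^ n"
  shows "P \<le> exp (- 2 * t)"
proof -
  have npos: "real n > 0" using k by simp
  define \<mu> where "\<mu> = (sqrt (real k) - sqrt t)^2"
  have mu: "real n * b = \<mu>" unfolding b_def \<mu>_def using npos by simp
  have gen: "P \<le> exp (- l * real k + \<mu> * (exp l - 1))" if l: "0 \<le> l" for l
  proof -
    have b0: "0 \<le> 1 - b + b * exp l" using b01 by (smt (verit) exp_gt_zero mult_nonneg_nonneg)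
    have "1 - b + b * exp l \<le> exp (b * (exp l - 1))"
      using exp_ge_add_one_self[of "b * (exp l - 1)"] by (simp add: algebra_simps)
    hence "(1 - b + b * exp l) ^ n \<le> exp (b * (exp l - 1)) ^ n"
      using b0 by (intro power_mono) auto
    also have "\<dots> = exp (\<mu> * (exp l - 1))"
      by (simp add: exp_of_nat_mult[symmetric] mu[symmetric])
    finally have "exp (- l * real k) * (1 - b + b * exp l) ^ n \<le> exp (- l * real k) * exp (\<mu> * (exp l - 1))"
      by (intro mult_left_mono) auto
    from order_trans[OF bound[OF l] this] show ?thesis by (metis exp_add)
  qed
  define w where "w = sqrt (real k)"
  define u where "u = sqrt t"
  have w: "w > 0" using k by (simp add: w_def)
  have u: "u > 0" using t by (simp add: u_def)
  have kw: "real k = w^2" by (simp add: w_def)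
  have tu: "t = u^2" using t by (simp add: u_def)
  have uw: "u \<le> w" using t unfolding u_def w_def by simp
  have mu2: "\<mu> = (w - u)^2" by (simp add: \<mu>_def w_def u_def)
  show ?thesis
  proof (cases "u = w")
    case True
    hence "\<mu> = 0" "t = real k" using mu2 tu kw by auto
    thus ?thesis using gen[of 2] by simp
  next
    case False
    hence uw': "u < w" using uw by simp
    define r where "r = u / w"
    have r: "0 \<le> r" "r < 1" using u w uw' by (auto simp: r_def)
    have wu: "w - u = w * (1 - r)" using w by (simp add: r_def field_simps)
    define l where "l = ln (real k / \<mu>)"
    have ratio: "real k / \<mu> = 1 / (1 - r)^2" using w r by (simp add: kw mu2 wu power_mult_distrib)
    have l: "l = - 2 * ln (1 - r)" unfolding l_def ratio using r by (simp add: ln_div ln_realpow)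
    have l0: "0 \<le> l" unfolding l using r by simp
    have el: "exp l = real k / \<mu>" unfolding l_def using w uw' k by (simp add: mu2)
    have "2 * r + r^2 \<le> l" unfolding l by (rule ln_ineq[OF r])
    hence "w^2 * (2 * r + r^2) \<le> w^2 * l" by (intro mult_left_mono) auto
    moreover have "w^2 * (2 * r + r^2) = 2 * w * u + u^2" using w by (simp add: r_def field_simps power2_eq_square)
    ultimately have A: "2 * w * u + u^2 \<le> w^2 * l" by simp
    have "- l * real k + \<mu> * (exp l - 1) = - l * w^2 + w^2 - (w - u)^2"
      unfolding el using w uw' by (simp add: kw mu2 field_simps)
    also have "\<dots> \<le> - 2 * t" using A tu by (simp add: power2_eq_square algebra_simps)
    finally show ?thesis using gen[OF l0] by (meson exp_le_cancel_iff order_trans)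
  qed
qed



lemma cnt_sum:
  "real (length (filter P (map x [0..<n]))) = (\<Sum>i<n. indicator {y. P y} (x i))"
  by (induction n) (auto simp: indicator_def)

lemma os_gt:
  assumes "1 \<le> k" "k \<le> n"
  shows "a < order_stat n k x \<longleftrightarrow> length (filter (\<lambda>y. y \<le> a) (map x [0..<n])) < k"
  using sort_nth_iff[of "\<lambda>y. y \<le> a" k "map x [0..<n]"] assms
  unfolding order_stat_def by (auto simp: not_le)

lemma os_lt:
  assumes "1 \<le> k" "k \<le> n"
  shows "order_stat n k x < b \<longleftrightarrow> k \<le> length (filter (\<lambda>y. y < b) (map x [0..<n]))"
  using sort_nth_iff[of "\<lambda>y. y < b" k "map x [0..<n]"] assms
  unfolding order_stat_def by auto

lemma map_reflx:
  "map (reflx n x) [0..<n] = map (\<lambda>y. 1 - y) (map x [0..<n])"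
  by (simp add: reflx_def compose_def)

lemma sym_gt:
  assumes "1 \<le> k" "k \<le> n"
  shows "a < 1 - order_stat n (n - k + 1) x \<longleftrightarrow> a < order_stat n k (reflx n x)"
proof -
  define xs where "xs = map x [0..<n]"
  have c: "length (filter (\<lambda>y. y < 1 - a) xs) + length (filter (\<lambda>y. \<not> y < 1 - a) xs) = n"
    using sum_length_filter_compl[of "\<lambda>y. y < 1 - a" xs] by (simp add: xs_def)
  have "a < 1 - order_stat n (n - k + 1) x \<longleftrightarrow> order_stat n (n - k + 1) x < 1 - a" by auto
  also have "\<dots> \<longleftrightarrow> n - k + 1 \<le> length (filter (\<lambda>y. y < 1 - a) xs)"
    using assms by (subst os_lt) (auto simp: xs_def)
  also have "\<dots> \<longleftrightarrow> length (filter (\<lambda>y. \<not> y < 1 - a) xs) < k" using c assms by linarith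
  also have "length (filter (\<lambda>y. \<not> y < 1 - a) xs) = length (filter (\<lambda>y. y \<le> a) (map (reflx n x) [0..<n]))"
    unfolding map_reflx xs_def filter_map by (auto simp: o_def intro!: arg_cong[where f=length] filter_cong)
  also have "\<dots> < k \<longleftrightarrow> a < order_stat n k (reflx n x)"
    using assms by (subst os_gt) auto
  finally show ?thesis .
qed

lemma sym_lt:
  assumes "1 \<le> k" "k \<le> n"
  shows "1 - order_stat n (n - k + 1) x < b \<longleftrightarrow> order_stat n k (reflx n x) < b"
proof -
  define xs where "xs = map x [0..<n]"
  have c: "length (filter (\<lambda>y. y \<le> 1 - b) xs) + length (filter (\<lambda>y. \<not> y \<le> 1 - b) xs) = n"
    using sum_length_filter_compl[of "\<lambda>y. y \<le> 1 - b" xs] by (simp add: xs_def)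
  have "1 - order_stat n (n - k + 1) x < b \<longleftrightarrow> 1 - b < order_stat n (n - k + 1) x" by auto
  also have "\<dots> \<longleftrightarrow> length (filter (\<lambda>y. y \<le> 1 - b) xs) < n - k + 1"
    using assms by (subst os_gt) (auto simp: xs_def)
  also have "\<dots> \<longleftrightarrow> k \<le> length (filter (\<lambda>y. \<not> y \<le> 1 - b) xs)" using c assms by linarith
  also have "length (filter (\<lambda>y. \<not> y \<le> 1 - b) xs) = length (filter (\<lambda>y. y < b) (map (reflx n x) [0..<n]))"
    unfolding map_reflx xs_def filter_map by (auto simp: o_def intro!: arg_cong[where f=length] filter_cong)
  also have "k \<le> \<dots> \<longleftrightarrow> order_stat n k (reflx n x) < b"
    using assms by (subst os_lt) auto
  finally show ?thesis .
qed

lemma measU_le: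
  assumes "a > 0"
  shows "measure U {..a} = (if a \<ge> 1 then 1 else a)"
proof (cases "a \<ge> 1")
  case True
  hence "{0..1} \<inter> {..a} = {0..(1::real)}" by auto
  thus ?thesis using True by simp
next
  case False
  hence "{0..1} \<inter> {..a} = {0..a}" by auto
  thus ?thesis using False assms by simp
qed

lemma measU_lt:
  assumes "0 \<le> b" "b \<le> 1"
  shows "measure U {..<b} = b"
proof -
  have "{0..1} \<inter> {..<b} = {0..<b}" using assms by auto
  moreover have "measure lborel {0..<b} = b" using assms by simp
  ultimately show ?thesis using assms by simp
qed



theorem lemmaA1:
  fixes n k :: nat and t :: real
  assumes "1 \<le> k" and "k \<le> n" and "t > 0"
  shows "measure (unif_sample n)
           {x \<in> space (unif_sample n). order_stat n k x > (sqrt (real k - 1) + sqrt t)^2 / real n}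
         = measure (unif_sample n)
           {x \<in> space (unif_sample n). 1 - order_stat n (n - k + 1) x > (sqrt (real k - 1) + sqrt t)^2 / real n}
       \<and> measure (unif_sample n)
           {x \<in> space (unif_sample n). 1 - order_stat n (n - k + 1) x > (sqrt (real k - 1) + sqrt t)^2 / real n}
         \<le> exp (- t)
       \<and> measure (unif_sample n)
           {x \<in> space (unif_sample n). order_stat n k x < (sqrt (real k) - sqrt t)^2 / real n}
         = measure (unif_sample n)
           {x \<in> space (unif_sample n). 1 - order_stat n (n - k + 1) x < (sqrt (real k) - sqrt t)^2 / real n}
       \<and> (t \<le> real k \<longrightarrow>
           measure (unif_sample n)
             {x \<in> space (unif_sample n). 1 - order_stat n (n - k + 1) x < (sqrt (real k) - sqrt t)^2 / real n}
           \<le> exp (- 2 * t))"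
proof -
  note k = assms(1,2) and t = assms(3)
  define M where "M = unif_sample n"
  interpret M: prob_space M unfolding M_def by (rule prob_M)
  define a where "a = (sqrt (real k - 1) + sqrt t)^2 / real n"
  define b where "b = (sqrt (real k) - sqrt t)^2 / real n"
  have npos: "real n > 0" using k by simp
  have a0: "a > 0"
  proof -
    have "sqrt (real k - 1) + sqrt t > 0" using t k by (simp add: add_nonneg_pos)
    thus ?thesis unfolding a_def using npos by simp
  qed
  define B1 where "B1 = {x \<in> space M. a < order_stat n k x}"
  define B2 where "B2 = {x \<in> space M. order_stat n k x < b}"
  have B1': "B1 = {x \<in> space M. (\<Sum>i<n. indicator {y. y \<le> a} (x i)) < real k}"
    unfolding B1_def using k by (auto simp: os_gt cnt_sum[symmetric])
  have B2': "B2 = {x \<in> space M. real k \<le> (\<Sum>i<n. indicator {y. y < b} (x i))}"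
    unfolding B2_def using k by (auto simp: os_lt cnt_sum[symmetric])
  have B1m: "B1 \<in> sets M" unfolding B1' M_def unif_sample_def by measurable
  have B2m: "B2 \<in> sets M" unfolding B2' M_def unif_sample_def by measurable
  have E1: "{x \<in> space M. 1 - order_stat n (n - k + 1) x > a} = reflx n -` B1 \<inter> space M"
  proof -
    have "x \<in> space M \<Longrightarrow> reflx n x \<in> space M" for x
      using refl_meas[of n] unfolding M_def by (auto simp: measurable_def)
    thus ?thesis unfolding B1_def using sym_gt[OF k] by auto
  qed
  have E2: "{x \<in> space M. 1 - order_stat n (n - k + 1) x < b} = reflx n -` B2 \<inter> space M"
  proof -
    have "x \<in> space M \<Longrightarrow> reflx n x \<in> space M" for x
      using refl_meas[of n] unfolding M_def by (auto simp: measurable_def)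
    thus ?thesis unfolding B2_def using sym_lt[OF k] by auto
  qed
  have eq1: "measure M B1 = measure M {x \<in> space M. 1 - order_stat n (n - k + 1) x > a}"
  proof -
    have "measure M (reflx n -` B1 \<inter> space M) = measure M B1"
      unfolding M_def by (rule measure_refl) (use B1m in \<open>simp add: M_def\<close>)
    thus ?thesis by (simp only: E1)
  qed
  have eq2: "measure M B2 = measure M {x \<in> space M. 1 - order_stat n (n - k + 1) x < b}"
  proof -
    have "measure M (reflx n -` B2 \<inter> space M) = measure M B2"
      unfolding M_def by (rule measure_refl) (use B2m in \<open>simp add: M_def\<close>)
    thus ?thesis by (simp only: E2)
  qed
  have bd1: "measure M B1 \<le> exp (- t)"
    unfolding a_def
  proof (rule R1[OF k t])
    fix l :: real assume l: "0 \<le> l"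
    let ?C = "{x \<in> space M. 0 \<le> (- l) * ((\<Sum>i<n. indicator {..a} (x i)) - (real k - 1))}"
    have sub: "B1 \<subseteq> ?C"
    proof
      fix x assume "x \<in> B1"
      hence x: "x \<in> space M" "length (filter (\<lambda>y. y \<le> a) (map x [0..<n])) < k"
        unfolding B1_def using os_gt[OF k] by auto
      hence "real (length (filter (\<lambda>y. y \<le> a) (map x [0..<n]))) \<le> real k - 1" by linarith
      hence "(\<Sum>i<n. indicator {..a} (x i)) \<le> real k - 1"
        using cnt_sum[of "\<lambda>y. y \<le> a" x n] by (simp add: atMost_def)
      hence "l * ((\<Sum>i<n. indicator {..a} (x i)) - (real k - 1)) \<le> 0"
        by (intro mult_nonneg_nonpos[OF l]) linarith
      thus "x \<in> ?C" using x by simp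
    qed
    have Cm: "?C \<in> sets M" unfolding M_def unif_sample_def by measurable
    have "measure M B1 \<le> measure M ?C" by (rule M.finite_measure_mono[OF sub Cm])
    also have "\<dots> \<le> exp (- (- l) * (real k - 1)) * (1 - measure U {..a} + measure U {..a} * exp (- l)) ^ n"
      unfolding M_def by (rule chernoff) simp
    also have "\<dots> = exp (l * (real k - 1)) * (1 - (if a \<ge> 1 then 1 else a) + (if a \<ge> 1 then 1 else a) * exp (- l)) ^ n"
      using a0 by (simp only: measU_le) simp
    finally show "measure M B1 \<le> exp (l * (real k - 1)) *
      (1 - (if (sqrt (real k - 1) + sqrt t)\<^sup>2 / real n \<ge> 1 then 1 else (sqrt (real k - 1) + sqrt t)\<^sup>2 / real n)
        + (if (sqrt (real k - 1) + sqrt t)\<^sup>2 / real n \<ge> 1 then 1 else (sqrt (real k - 1) + sqrt t)\<^sup>2 / real n) * exp (- l)) ^ n"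
      unfolding a_def .
  qed
  have bd2: "measure M B2 \<le> exp (- 2 * t)" if tk: "t \<le> real k"
  proof -
    have b0: "0 \<le> b" unfolding b_def by simp
    have "(sqrt (real k) - sqrt t)^2 \<le> real k"
    proof -
      have "sqrt t \<le> sqrt (real k)" using tk by simp
      hence "(sqrt (real k) - sqrt t)^2 = sqrt (real k)^2 - sqrt t * (2 * sqrt (real k) - sqrt t)"
        by (simp add: power2_eq_square algebra_simps)
      also have "\<dots> \<le> sqrt (real k)^2"
      proof -
        have "0 \<le> sqrt t * (2 * sqrt (real k) - sqrt t)"
          using \<open>sqrt t \<le> sqrt (real k)\<close> t real_sqrt_ge_zero[of "real k"]
          by (intro mult_nonneg_nonneg; linarith?) simp
        thus ?thesis by linarith
      qed
      finally show ?thesis by simp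
    qed
    hence b1: "b \<le> 1" unfolding b_def using k npos by (simp add: divide_le_eq)
    show ?thesis
    proof (rule R2[OF k t tk])
      show "0 \<le> (sqrt (real k) - sqrt t)\<^sup>2 / real n" "(sqrt (real k) - sqrt t)\<^sup>2 / real n \<le> 1"
        using b0 b1 unfolding b_def by auto
      fix l :: real assume l: "0 \<le> l"
      let ?C = "{x \<in> space M. 0 \<le> l * ((\<Sum>i<n. indicator {..<b} (x i)) - real k)}"
      have sub: "B2 \<subseteq> ?C"
        using l unfolding B2' by (auto simp: lessThan_def)
      have Cm: "?C \<in> sets M" unfolding M_def unif_sample_def by measurable
      have "measure M B2 \<le> measure M ?C" by (rule M.finite_measure_mono[OF sub Cm])
      also have "\<dots> \<le> exp (- l * real k) * (1 - measure U {..<b} + measure U {..<b} * exp l) ^ n"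
        unfolding M_def by (rule chernoff) simp
      also have "\<dots> = exp (- l * real k) * (1 - b + b * exp l) ^ n"
        using b0 b1 by (simp only: measU_lt)
      finally show "measure M B2 \<le> exp (- l * real k) * (1 - (sqrt (real k) - sqrt t)\<^sup>2 / real n
          + (sqrt (real k) - sqrt t)\<^sup>2 / real n * exp l) ^ n"
        unfolding b_def .
    qed
  qed
  show ?thesis
    using eq1 eq2 bd1 bd2
    unfolding M_def[symmetric] a_def[symmetric] b_def[symmetric] B1_def B2_def by simp
qed

end
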